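(* Let $L$ be a hyperbolic lattice of rank $m+1$ with a fixed positive cone $\mathcal{P}_L$, and let $f$ be a non-zero vector in the closure $\overline{\mathcal{P}}_L$ with $f^2=0$. Let $\alpha>0$ and let $\mathrm{HS}_\alpha$ be the horosphere $\{x\in\mathcal{P}_L : \langle x,f\rangle^2/x^2=\alpha\}/\mathbb{R}_{>0}$ with base $b=\mathbb{R}_{>0}f$. Put $$c(f,\mathrm{HS}_\alpha):=\sup\Big\{-\frac{\langle v,f\rangle^2}{v^2} \;:\; v\in\mathcal{N}_L,\ \text{there exists } x\in\mathcal{P}_L \text{ with } \langle x,v\rangle=0 \text{ and } \frac{\langle x,f\rangle^2}{x^2}=\alpha\Big\}.$$ Then $c(f,\mathrm{HS}_\alpha)\le\alpha$.
   Context: A hyperbolic lattice is a free $\mathbb{Z}$-module $L$ of finite rank $n>1$ with a non-degenerate symmetric bilinear form $\langle\ ,\ \rangle$ with values in $\mathbb{Z}$ of signature $(1,n-1)$; the form is extended to $L\otimes\mathbb{R}$ and $x^2:=\langle x,x\rangle$. A positive cone $\mathcal{P}_L$ is one of the two connected components of $\{x\in L\otimes\mathbb{R}: x^2>0\}$, and $\overline{\mathcal{P}}_L$ is its closure. $\mathcal{N}_L:=\{v\in L\otimes\mathbb{R}: v^2<0\}$. The hyperbolic space is $\mathcal{H}_L=\mathcal{P}_L/\mathbb{R}_{>0}$, and the horospheres with base the boundary point $b=\mathbb{R}_{>0}f$ are the level sets of the function $x\mapsto\langle x,f\rangle^2/x^2$ on $\mathcal{H}_L$. *)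

theory Defs
  imports "HOL-Analysis.Analysis"
begin

text \<open>A hyperbolic lattice L of rank n = CARD('n) is modelled as the standard lattice
  of integer vectors in real^'n, equipped with an integral symmetric Gram matrix G;
  L \<otimes> R is real^'n and the form is extended bilinearly.\<close>

definition bform :: "real^'n^'n \<Rightarrow> real^'n \<Rightarrow> real^'n \<Rightarrow> real" where
  "bform G x y = x \<bullet> (G *v y)"

definition hyperbolic_gram :: "real^'n^'n \<Rightarrow> bool" where
  "hyperbolic_gram G \<longleftrightarrow>

     (\<forall>i j. G$i$j \<in> \<int>) \<and>
     transpose G = G \<and>
     (\<exists>(P::real^'n^'n) i0. invertible P \<and>
        transpose P ** G ** P =
          (\<chi> i j. if i = j then (if i = i0 then 1 else -1) else 0))"

definition positive_cone :: "real^'n^'n \<Rightarrow> (real^'n) set \<Rightarrow> bool" where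
  "positive_cone G C \<longleftrightarrow>
     (\<exists>x0. bform G x0 x0 > 0 \<and>
        C = connected_component_set {x. bform G x x > 0} x0)"

end

theory Submission
  imports Defs
begin

lemma bform_sym: "transpose G = G \<Longrightarrow> bform G x y = bform G y x"
  unfolding bform_def
  by (metis dot_lmul_matrix inner_commute transpose_matrix_vector)

lemma bform_add_l: "bform G (x + y) z = bform G x z + bform G y z"
  by (simp add: bform_def inner_add_left)
lemma bform_add_r: "bform G z (x + y) = bform G z x + bform G z y"
  by (simp add: bform_def inner_add_right algebra_simps)
lemma bform_diff_l: "bform G (x - y) z = bform G x z - bform G y z"
  by (simp add: bform_def inner_diff_left)
lemma bform_diff_r: "bform G z (x - y) = bform G z x - bform G z y"
  by (simp add: bform_def inner_diff_right algebra_simps)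
lemma bform_scale_l: "bform G (c *\<^sub>R x) z = c * bform G x z"
  by (simp add: bform_def)
lemma bform_scale_r: "bform G z (c *\<^sub>R x) = c * bform G z x"
  by (simp add: bform_def algebra_simps)

lemma bform_P: "bform G (P *v a) (P *v b) = a \<bullet> ((transpose P ** G ** P) *v b)"
  unfolding bform_def
  by (metis dot_lmul_matrix matrix_vector_mul_assoc vector_transpose_matrix)

lemma diag_form:
  fixes a b :: "real^'n" and i0 :: 'n
  defines "D \<equiv> (\<chi> i j. if i = j then (if i = i0 then 1 else -1) else (0::real))"
  shows "a \<bullet> (D *v b) = a$i0 * b$i0 - (\<chi> i. if i = i0 then 0 else a$i) \<bullet> (\<chi> i. if i = i0 then 0 else b$i)"
proof -
  have Db: "D *v b = (\<chi> i. if i = i0 then b$i else - b$i)"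
  proof -
    have "(D *v b)$i = (if i = i0 then b$i else - b$i)" for i
    proof -
      have "(D *v b)$i = (\<Sum>j\<in>UNIV. (if i = j then (if i = i0 then b$i else - b$i) else 0))"
        unfolding D_def matrix_vector_mult_def vec_lambda_beta by (intro sum.cong) auto
      also have "\<dots> = (if i = i0 then b$i else - b$i)" by simp
      finally show ?thesis .
    qed
    thus ?thesis by (simp add: vec_eq_iff)
  qed
  have "a \<bullet> (D *v b) = (\<Sum>i\<in>UNIV. (if i = i0 then a$i*b$i else 0) - (if i = i0 then 0 else a$i*b$i))"
    unfolding Db inner_vec_def by (intro sum.cong) auto
  also have "\<dots> = a$i0 * b$i0 - (\<Sum>i\<in>UNIV. (if i = i0 then 0 else a$i*b$i))"
    by (simp add: sum_subtractf)
  also have "(\<Sum>i\<in>UNIV. (if i = i0 then 0 else a$i*b$i)) = (\<chi> i. if i = i0 then 0 else a$i) \<bullet> (\<chi> i. if i = i0 then 0 else b$i)"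
    unfolding inner_vec_def by (intro sum.cong) auto
  finally show ?thesis .
qed

lemma diag_semidef:
  fixes a b abar bbar :: "real^'n" and a0 b0 :: real
  assumes "a0 * a0 - abar \<bullet> abar > 0" and "a0 * b0 - abar \<bullet> bbar = 0"
  shows "b0 * b0 - bbar \<bullet> bbar \<le> 0"
proof -
  have na: "abar \<bullet> abar = (norm abar)^2" "bbar \<bullet> bbar = (norm bbar)^2"
    by (simp_all add: power2_norm_eq_inner)
  have a0: "a0^2 > (norm abar)^2" using assms(1) na by (simp add: power2_eq_square)
  have "(a0*b0)^2 = (abar \<bullet> bbar)^2" using assms(2) by simp
  also have "\<dots> \<le> (norm abar * norm bbar)^2"
  proof -
    have "\<bar>abar \<bullet> bbar\<bar> \<le> norm abar * norm bbar" by (rule Cauchy_Schwarz_ineq2)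
    hence "\<bar>abar \<bullet> bbar\<bar>^2 \<le> (norm abar * norm bbar)^2"
      by (intro power_mono) auto
    thus ?thesis by simp
  qed
  also have "\<dots> \<le> a0^2 * (norm bbar)^2"
    using a0 by (simp add: power_mult_distrib mult_right_mono)
  finally have "a0^2 * b0^2 \<le> a0^2 * (norm bbar)^2" by (simp add: power_mult_distrib)
  moreover have "a0^2 > 0" using a0 zero_le_power2[of "norm abar"] by linarith
  ultimately have "b0^2 \<le> (norm bbar)^2" by simp
  thus ?thesis using na by (simp add: power2_eq_square)
qed

lemma orth_neg:
  fixes G :: "real^'n^'n"
  assumes "hyperbolic_gram G" and "bform G x x > 0" and "bform G x y = 0"
  shows "bform G y y \<le> 0"
proof -
  from assms(1) obtain P :: "real^'n^'n" and i0 where P: "invertible P"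
    and D: "transpose P ** G ** P = (\<chi> i j. if i = j then (if i = i0 then 1 else -1) else 0)"
    unfolding hyperbolic_gram_def by blast
  from P obtain Q where Q: "P ** Q = mat 1" using invertible_right_inverse by blast
  define a where "a = Q *v x"
  define b where "b = Q *v y"
  have xa: "x = P *v a" unfolding a_def by (simp add: matrix_vector_mul_assoc Q)
  have yb: "y = P *v b" unfolding b_def by (simp add: matrix_vector_mul_assoc Q)
  have e: "\<And>u v. bform G (P *v u) (P *v v) = u$i0 * v$i0 - (\<chi> i. if i = i0 then 0 else u$i) \<bullet> (\<chi> i. if i = i0 then 0 else v$i)"
    unfolding bform_P D by (rule diag_form)
  have 1: "bform G x x = a$i0 * a$i0 - (\<chi> i. if i = i0 then 0 else a$i) \<bullet> (\<chi> i. if i = i0 then 0 else a$i)"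
    unfolding xa by (rule e)
  have 2: "bform G x y = a$i0 * b$i0 - (\<chi> i. if i = i0 then 0 else a$i) \<bullet> (\<chi> i. if i = i0 then 0 else b$i)"
    unfolding xa yb by (rule e)
  have 3: "bform G y y = b$i0 * b$i0 - (\<chi> i. if i = i0 then 0 else b$i) \<bullet> (\<chi> i. if i = i0 then 0 else b$i)"
    unfolding yb by (rule e)
  show ?thesis
    unfolding 3 by (rule diag_semidef) (use assms(2,3) 1 2 in auto)
qed

theorem lemma2p4:
  fixes G :: "real^'n^'n" and PL :: "(real^'n) set" and f :: "real^'n" and \<alpha> :: real
  assumes "CARD('n) > 1" and "hyperbolic_gram G"
    and "positive_cone G PL"
    and "f \<in> closure PL" and "f \<noteq> 0" and "bform G f f = 0"
    and "\<alpha> > 0"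
  shows "Sup (ereal ` {- (bform G v f)\<^sup>2 / bform G v v | v.
             bform G v v < 0 \<and>
             (\<exists>x\<in>PL. bform G x v = 0 \<and> (bform G x f)\<^sup>2 / bform G x x = \<alpha>)})
         \<le> ereal \<alpha>"
proof (rule Sup_least)
  fix y assume "y \<in> ereal ` {- (bform G v f)\<^sup>2 / bform G v v | v.
             bform G v v < 0 \<and>
             (\<exists>x\<in>PL. bform G x v = 0 \<and> (bform G x f)\<^sup>2 / bform G x x = \<alpha>)}"
  then obtain v x where y: "y = ereal (- (bform G v f)\<^sup>2 / bform G v v)"
    and vv: "bform G v v < 0" and x: "x \<in> PL" and xv: "bform G x v = 0"
    and al: "(bform G x f)\<^sup>2 / bform G x x = \<alpha>" by blast
  have sym: "transpose G = G" using assms(2) unfolding hyperbolic_gram_def by blast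
  have xx: "bform G x x > 0"
    using assms(3) x connected_component_subset unfolding positive_cone_def by blast
  define c where "c = bform G x f / bform G x x"
  define w where "w = f - c *\<^sub>R x"
  define t where "t = - bform G v w / bform G v v"
  define u where "u = w + t *\<^sub>R v"
  have xw: "bform G x w = 0" using xx
    by (simp add: w_def c_def bform_diff_r bform_scale_r)
  have xu: "bform G x u = 0" using xw xv
    by (simp add: u_def bform_add_r bform_scale_r)
  have uu: "bform G u u \<le> 0" by (rule orth_neg[OF assms(2) xx xu])
  have vw: "bform G v w = bform G v f"
    using xv bform_sym[OF sym, of v x]
    by (simp add: w_def bform_diff_r bform_scale_r)
  have ww: "bform G w w = - \<alpha>"
  proof -
    have "bform G w w = bform G f f - 2 * c * bform G x f + c*c * bform G x x"
      using bform_sym[OF sym, of f x]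
      by (simp add: w_def bform_diff_r bform_diff_l bform_scale_r bform_scale_l algebra_simps)
    also have "\<dots> = - (bform G x f)\<^sup>2 / bform G x x"
      using xx assms(6) by (simp add: c_def field_simps power2_eq_square)
    finally show ?thesis using al by simp
  qed
  have "bform G u u = bform G w w + 2 * t * bform G v w + t*t * bform G v v"
    using bform_sym[OF sym, of v w]
    by (simp add: u_def bform_add_r bform_add_l bform_scale_r bform_scale_l algebra_simps)
  also have "\<dots> = - \<alpha> - (bform G v f)^2 / bform G v v"
    using vv ww vw by (simp add: t_def field_simps power2_eq_square)
  finally have "- (bform G v f)\<^sup>2 / bform G v v \<le> \<alpha>" using uu by simp
  thus "y \<le> ereal \<alpha>" unfolding y by simp
qed

end
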